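(* Let $p$ be a prime with $p \equiv 5 \pmod 8$ and $p = s^2 + 4$ for some odd integer $s$. Let $g$ be a generator of $\mathbb{F}_p^*$, $C_0^{(4)}$ the subgroup of index $4$ of $\mathbb{F}_p^*$, $C_i^{(4)} = g^i C_0^{(4)}$, and $D = C_0^{(4)} \cup C_1^{(4)}$. Let $S_D$ be the set of $a \in \mathbb{F}_p^*$ such that the equation $x - y = a$ has exactly $(p-5)/4$ solutions $(x,y)\in D\times D$. Then $S_D = C_0^{(2)}$ or $S_D = C_1^{(2)}$, where $C_0^{(2)}$ is the subgroup of index $2$ of $\mathbb{F}_p^*$ (the nonzero squares) and $C_1^{(2)} = g C_0^{(2)}$.
   Context: Under the stated hypotheses it is known that $D$ is a $(p,(p-1)/2,(p-5)/4)$-almost difference set of $\mathbb{F}_p^+$, i.e. exactly $(p-1)/2$ nonzero $a$ give $(p-5)/4$ solutions of $x-y=a$ in $D\times D$ and all other nonzero $a$ give $(p-1)/4$ solutions. *)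

theory Defs
  imports "HOL-Number_Theory.Number_Theory"
begin

text \<open>The field F_p is modelled by the residues {0..p-1} (natural numbers) with
 arithmetic modulo p; F_p^* is {1..p-1}.\<close>

definition is_generator :: "nat \<Rightarrow> nat \<Rightarrow> bool" where
  "is_generator p g \<longleftrightarrow> g \<in> {1..p-1} \<and> ord p g = p - 1"

definition cyclotomic_class :: "nat \<Rightarrow> nat \<Rightarrow> nat \<Rightarrow> nat \<Rightarrow> nat set" where
  "cyclotomic_class p g e i = {x \<in> {1..p-1}. \<exists>k::nat. [x = g ^ (e * k + i)] (mod p)}"

definition diff_count :: "nat \<Rightarrow> nat set \<Rightarrow> nat \<Rightarrow> nat" where
  "diff_count p D a = card {(x, y). x \<in> D \<and> y \<in> D \<and> [int x - int y = int a] (mod int p)}"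

end

theory Submission
  imports Defs
begin

lemma sum_shift_mod:
  fixes P d :: int and F :: "int \<Rightarrow> 'a::comm_monoid_add"
  assumes P: "P > 0" and per: "\<And>x. F (x mod P) = F x"
  shows "(\<Sum>x\<in>{0..<P}. F (x + d)) = (\<Sum>x\<in>{0..<P}. F x)"
proof -
  have "(\<Sum>x\<in>{0..<P}. F (x + d)) = (\<Sum>x\<in>{0..<P}. F ((x + d) mod P))"
    by (simp add: per)
  also have "\<dots> = (\<Sum>x\<in>{0..<P}. F x)"
    by (rule sum.reindex_bij_witness[where i="\<lambda>y. (y - d) mod P" and j="\<lambda>x. (x + d) mod P"])
       (use P in \<open>auto simp: mod_simps\<close>)
  finally show ?thesis .
qed

lemma sum_scale_mod:
  fixes P c :: int and F :: "int \<Rightarrow> 'a::comm_monoid_add"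
  assumes P: "prime P" and c: "\<not> P dvd c" and per: "\<And>x. F (x mod P) = F x"
  shows "(\<Sum>x\<in>{0..<P}. F (c * x)) = (\<Sum>x\<in>{0..<P}. F x)"
proof -
  have "coprime c P" using P c
    by (simp add: prime_imp_coprime coprime_commute)
  then obtain c' where c': "[c * c' = 1] (mod P)" using cong_solve_coprime_int by blast
  have Pp: "P > 0" using P prime_gt_0_int by blast
  have "(\<Sum>x\<in>{0..<P}. F (c * x)) = (\<Sum>x\<in>{0..<P}. F ((c * x) mod P))"
    by (simp add: per)
  also have "\<dots> = (\<Sum>x\<in>{0..<P}. F x)"
  proof (rule sum.reindex_bij_witness[where i="\<lambda>y. (c' * y) mod P" and j="\<lambda>x. (c * x) mod P"])
    fix a assume a: "a \<in> {0..<P}"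
    have "(c * ((c' * a) mod P)) mod P = ((c * c') * a) mod P"
      by (simp add: mod_simps mult.assoc)
    also have "\<dots> = (1 * a) mod P" using c' unfolding cong_def by (metis mod_mult_left_eq)
    finally show "c * (c' * a mod P) mod P = a" using a by simp
  next
    fix a assume a: "a \<in> {0..<P}"
    have "(c' * ((c * a) mod P)) mod P = ((c * c') * a) mod P"
      by (simp add: mod_simps ac_simps)
    also have "\<dots> = (1 * a) mod P" using c' unfolding cong_def by (metis mod_mult_left_eq)
    finally show "c' * (c * a mod P) mod P = a" using a by simp
  qed (use Pp in auto)
  finally show ?thesis .
qed


locale cyc =
  fixes p g :: nat
  assumes prime_p: "prime p" and p8: "p mod 8 = 5" and gen: "is_generator p g"
begin

abbreviation "P \<equiv> int p"

lemma p_ge5: "p \<ge> 5" using p8 by presburger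
lemma P_prime: "prime P" using prime_p by simp
lemma four_dvd: "4 dvd (p - 1)" using p8 by presburger
lemma ord_g: "ord p g = p - 1" using gen unfolding is_generator_def by simp
lemma g_range: "g \<in> {1..p-1}" using gen unfolding is_generator_def by simp
lemma g_ndvd: "\<not> p dvd g"
proof -
  have "0 < g" "g < p" using g_range p_ge5 by auto
  thus "\<not> p dvd g" by (meson dvd_imp_le leD)
qed
lemma coprime_pg: "coprime p g"
proof -
  have "\<not> p dvd g" by (rule g_ndvd)
  thus ?thesis using prime_p by (simp add: prime_imp_coprime)
qed
lemma totient_p: "totient p = p - 1" using prime_p by (simp add: totient_prime)
lemma primroot: "residue_primroot p g"
  using coprime_pg ord_g totient_p p_ge5 by (simp add: residue_primroot_def)

lemma exists_ind:
  fixes x :: int assumes "x mod P \<noteq> 0"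
  shows "\<exists>k. k < p - 1 \<and> g ^ k mod p = nat (x mod P)"
proof -
  have r1: "0 \<le> x mod P" and r2: "x mod P < P" using p_ge5 by simp_all
  have n1: "0 < nat (x mod P)" using r1 assms by linarith
  have n2: "nat (x mod P) < p" using r2 r1 by linarith
  have "nat (x mod P) \<in> totatives p"
  proof -
    have "\<not> p dvd nat (x mod P)" using n1 n2 by (meson dvd_imp_le leD)
    hence "coprime p (nat (x mod P))" using prime_p by (simp add: prime_imp_coprime)
    thus ?thesis using n1 n2 by (simp add: totatives_def coprime_commute)
  qed
  then obtain k where "k < totient p" "g ^ k mod p = nat (x mod P)"
    using residue_primroot_is_generator[OF _ primroot] p_ge5
    unfolding bij_betw_def by force
  thus ?thesis using totient_p by auto
qed

definition ind :: "int \<Rightarrow> nat" where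
  "ind x = (SOME k. k < p - 1 \<and> g ^ k mod p = nat (x mod P))"

definition psi :: "int \<Rightarrow> complex" where
  "psi x = (if x mod P = 0 then 0 else \<i> ^ ind x)"

lemma i_pow_mod4: "(\<i>::complex) ^ n = \<i> ^ (n mod 4)"
proof -
  have i4: "(\<i>::complex)^4 = 1" by (simp add: numeral_eq_Suc)
  have "(\<i>^4) ^ (n div 4) * \<i> ^ (n mod 4) = (\<i>::complex) ^ (4 * (n div 4) + n mod 4)"
    by (simp only: power_add power_mult)
  also have "4 * (n div 4) + n mod 4 = n" by simp
  finally show ?thesis using i4 by simp
qed

lemma i_pow_cong: "[m = n] (mod 4) \<Longrightarrow> (\<i>::complex) ^ m = \<i> ^ n"
  by (metis i_pow_mod4 cong_def)

lemma psi_eq: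
  fixes x :: int
  assumes x: "x mod P \<noteq> 0" and k: "[int g ^ k = x] (mod P)"
  shows "psi x = \<i> ^ k"
proof -
  obtain k0 where k0: "k0 < p - 1 \<and> g ^ k0 mod p = nat (x mod P)" using exists_ind[OF x] by blast
  hence ik: "ind x < p - 1 \<and> g ^ ind x mod p = nat (x mod P)"
    unfolding ind_def by (rule someI)
  have "int (g ^ ind x mod p) = x mod P" using ik x
    by (metis Euclidean_Rings.pos_mod_sign int_nat_eq of_nat_0_less_iff p_ge5 less_le_trans zero_less_numeral)
  hence "[int g ^ ind x = x] (mod P)" by (simp add: cong_def of_nat_mod)
  hence "[int g ^ ind x = int g ^ k] (mod P)" using k by (metis cong_sym cong_trans)
  hence "[g ^ ind x = g ^ k] (mod p)" by (metis cong_int_iff of_nat_power)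
  hence "[ind x = k] (mod (p - 1))" using order_divides_expdiff[OF coprime_pg] ord_g by simp
  hence "[ind x = k] (mod 4)" using four_dvd cong_dvd_modulus_nat by blast
  thus ?thesis using x by (simp add: psi_def i_pow_cong)
qed

lemma exists_pow:
  fixes x :: int assumes "x mod P \<noteq> 0" shows "\<exists>k. [int g ^ k = x] (mod P)"
proof -
  obtain k where "g ^ k mod p = nat (x mod P)" using exists_ind[OF assms] by blast
  hence "int (g ^ k mod p) = x mod P" 
    by (metis Euclidean_Rings.pos_mod_sign int_nat_eq of_nat_0_less_iff p_ge5 less_le_trans zero_less_numeral)
  thus ?thesis by (auto simp: cong_def of_nat_mod)
qed

lemma psi_0: "x mod P = 0 \<Longrightarrow> psi x = 0" by (simp add: psi_def)
lemma psi_mod: "psi (x mod P) = psi x" by (simp add: psi_def ind_def)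

lemma psi_mult: "psi (x * y) = psi x * psi y"
proof (cases "x mod P = 0 \<or> y mod P = 0")
  case True
  hence "(x * y) mod P = 0" by (metis mod_mult_left_eq mod_mult_right_eq mult_zero_left mult_zero_right mod_0)
  thus ?thesis using True by (auto simp: psi_0)
next
  case False
  then obtain a b where a: "[int g ^ a = x] (mod P)" and b: "[int g ^ b = y] (mod P)"
    using exists_pow by blast
  have xy: "(x * y) mod P \<noteq> 0" using False P_prime
    by (metis dvd_eq_mod_eq_0 prime_dvd_mult_iff)
  have "[int g ^ (a + b) = x * y] (mod P)" unfolding power_add using a b by (rule cong_mult)
  from psi_eq[OF xy this] show ?thesis using psi_eq[OF _ a] psi_eq[OF _ b] False by (simp add: power_add)
qed

lemma psi_g: "psi (int g) = \<i>"
proof -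
  have "int g mod P \<noteq> 0" using g_ndvd
    by (metis int_dvd_int_iff mod_0_imp_dvd)
  thus ?thesis using psi_eq[of "int g" 1] by simp
qed

lemma psi_1: "psi 1 = 1"
  using psi_eq[of 1 0] p_ge5 by simp

lemma m1_nz: "(-1::int) mod P \<noteq> 0"
proof
  assume "(-1::int) mod P = 0"
  hence "P dvd 1" by (simp add: mod_eq_0_iff_dvd)
  thus False using p_ge5 by simp
qed

lemma psi_m1: "psi (-1) = -1"
proof -
  define f where "f = (p - 1) div 4"
  have pf: "p - 1 = 4 * f" using four_dvd f_def by simp
  have fo: "odd f" using p8 pf by presburger
  have "[g ^ (p - 1) = 1] (mod p)" using ord_g ord_works by metis
  hence "[g ^ (2*f) * g ^ (2*f) = 1] (mod p)" using pf by (simp add: power_add[symmetric])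
  hence sq: "[int g ^ (2*f) * int g ^ (2*f) = 1] (mod P)"
    by (metis cong_int_iff of_nat_1 of_nat_mult of_nat_power)
  have pos: "0 < int g ^ (2*f)" using g_range by simp
  have n1: "\<not> [int g ^ (2*f) = 1] (mod P)"
  proof
    assume "[int g ^ (2*f) = 1] (mod P)"
    hence "[g ^ (2*f) = 1] (mod p)" by (metis cong_int_iff of_nat_1 of_nat_power)
    moreover have "0 < 2*f" "2*f < ord p g" using fo pf ord_g odd_pos by auto
    ultimately show False using ord_minimal by blast
  qed
  have "[int g ^ (2 * f) = -1] (mod P)"
    using cong_square[OF P_prime pos sq] n1 by blast
  hence "psi (-1) = \<i> ^ (2 * f)" using psi_eq[OF m1_nz] by blast
  also have "\<dots> = -1" using fo by (simp add: power_mult)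
  finally show ?thesis .
qed

end

context cyc begin

abbreviation "U \<equiv> {0..<P}"

lemma P_pos: "P > 0" using p_ge5 by simp

lemma psi_cong: "x mod P = y mod P \<Longrightarrow> psi x = psi y"
  by (simp add: psi_def ind_def)

lemma psi_nz: "x mod P \<noteq> 0 \<Longrightarrow> \<exists>k. psi x = \<i> ^ k"
  using exists_pow psi_eq by blast

lemma i_pow4: "(\<i>::complex) ^ (4 * k) = 1"
proof -
  have "(\<i>::complex)^4 = 1" by (simp add: eval_nat_numeral)
  thus ?thesis by (simp add: power_mult)
qed

lemma psi_pow4: "psi x ^ 4 = (if x mod P = 0 then 0 else 1)"
proof (cases "x mod P = 0")
  case True thus ?thesis by (simp add: psi_0)
next
  case False
  then obtain k where "psi x = \<i> ^ k" using psi_nz by blast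
  hence "psi x ^ 4 = 1" by (metis i_pow4 power_mult mult.commute)
  thus ?thesis using False by simp
qed

lemma pow4_split: "(z::complex)^4 = z * z^3" by (simp add: eval_nat_numeral)

lemma cnj_i_pow: "cnj ((\<i>::complex) ^ k) = (\<i> ^ k) ^ 3"
proof -
  have "cnj ((\<i>::complex) ^ k) = (-\<i>) ^ k" by simp
  also have "(-\<i>::complex) = \<i>^3" by (simp add: eval_nat_numeral)
  finally show ?thesis by (metis power_mult mult.commute)
qed

lemma psi_cnj: "cnj (psi x) = psi x ^ 3"
proof (cases "x mod P = 0")
  case True thus ?thesis by (simp add: psi_0)
next
  case False
  then obtain k where k: "psi x = \<i> ^ k" using psi_nz by blast
  show ?thesis unfolding k by (rule cnj_i_pow)
qed

lemma psi_norm: "x mod P \<noteq> 0 \<Longrightarrow> psi x * cnj (psi x) = 1"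
  using psi_pow4[of x] by (simp add: psi_cnj pow4_split)

lemma shift: 
  assumes "\<And>x. F (x mod P) = F x"
  shows "(\<Sum>x\<in>U. F (x + d)) = (\<Sum>x\<in>U. (F x :: complex))"
  by (rule sum_shift_mod[of P F d]) (use P_pos assms in auto)

lemma scale:
  assumes "c mod P \<noteq> 0" "\<And>x. F (x mod P) = F x"
  shows "(\<Sum>x\<in>U. F (c * x)) = (\<Sum>x\<in>U. (F x :: complex))"
  by (rule sum_scale_mod[of P c F]) (use P_prime assms in \<open>auto simp add: dvd_eq_mod_eq_0\<close>)

lemma g_nz: "int g mod P \<noteq> 0"
  using g_ndvd by (metis int_dvd_int_iff mod_0_imp_dvd)

lemma sum_psi_pow:
  assumes "n mod 4 \<noteq> 0"
  shows "(\<Sum>x\<in>U. psi x ^ n) = 0"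
proof -
  have "(\<Sum>x\<in>U. psi (int g * x) ^ n) = (\<Sum>x\<in>U. psi x ^ n)"
    by (rule scale[OF g_nz]) (simp add: psi_mod)
  moreover have "(\<Sum>x\<in>U. psi (int g * x) ^ n) = \<i> ^ n * (\<Sum>x\<in>U. psi x ^ n)"
    by (simp add: psi_mult psi_g power_mult_distrib sum_distrib_left)
  moreover have "(\<i>::complex) ^ n \<noteq> 1"
  proof
    assume "(\<i>::complex) ^ n = 1"
    hence "(\<i>::complex) ^ (n mod 4) = 1" by (metis i_pow_mod4)
    moreover have "n mod 4 = 1 \<or> n mod 4 = 2 \<or> n mod 4 = 3" using assms by presburger
    hence "n mod 4 \<in> {1,2,3}" by blast
    moreover have "(\<i>::complex)^r \<noteq> 1" if "r \<in> {1,2,3}" for r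
      using that by (auto simp: power3_eq_cube complex_eq_iff)
    ultimately show False by blast
  qed
  ultimately have "(\<i> ^ n - 1) * (\<Sum>x\<in>U. psi x ^ n) = 0"
    by (simp add: algebra_simps)
  thus ?thesis using \<open>(\<i>::complex) ^ n \<noteq> 1\<close> by simp
qed

lemma U_split: "U = insert 0 {1..<P}" using P_pos by auto

lemma sum_U_split: "(\<Sum>x\<in>U. f x) = f 0 + (\<Sum>x\<in>{1..<P}. (f x :: complex))"
  by (simp add: U_split)

lemma sum_psi4: "(\<Sum>x\<in>U. psi x ^ 4) = of_nat (p - 1)"
proof -
  have "(\<Sum>x\<in>{1..<P}. psi x ^ 4) = (\<Sum>x\<in>{1..<P}. 1)"
    by (intro sum.cong refl) (simp add: psi_pow4)
  also have "\<dots> = of_nat (p - 1)" using p_ge5 by (simp add: of_nat_diff)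
  finally show ?thesis by (simp add: sum_U_split psi_0)
qed

definition T :: "int \<Rightarrow> complex" where
  "T d = (\<Sum>z\<in>U. psi (z + d) * cnj (psi z))"

lemma T_mod: "T (d mod P) = T d"
  unfolding T_def by (intro sum.cong refl arg_cong2[where f="(*)"] psi_cong) (simp add: mod_simps)

lemma T_0: "T 0 = of_nat (p - 1)"
  unfolding T_def using sum_psi4 by (simp add: psi_cnj pow4_split)

lemma T_scale:
  assumes c: "c mod P \<noteq> 0" shows "T (c * d) = T d"
proof -
  have "T (c * d) = (\<Sum>z\<in>U. psi (c * z + c * d) * cnj (psi (c * z)))"
    unfolding T_def
    by (rule scale[OF c, symmetric, where F="\<lambda>z. psi (z + c * d) * cnj (psi z)"])
       (intro arg_cong2[where f="(*)"] psi_cong arg_cong[where f=cnj], simp_all add: mod_simps)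
  also have "\<dots> = (\<Sum>z\<in>U. (psi c * cnj (psi c)) * (psi (z + d) * cnj (psi z)))"
    by (intro sum.cong refl) (simp add: distrib_left[symmetric] psi_mult)
  finally show ?thesis using psi_norm[OF c] by (simp add: T_def)
qed

end

context cyc begin

lemma T_sum: "(\<Sum>d\<in>U. T d) = 0"
proof -
  have "(\<Sum>d\<in>U. T d) = (\<Sum>z\<in>U. \<Sum>d\<in>U. psi (z + d) * cnj (psi z))"
    unfolding T_def by (rule sum.swap)
  also have "\<dots> = (\<Sum>z\<in>U. cnj (psi z) * (\<Sum>d\<in>U. psi (d + z)))"
    by (simp add: sum_distrib_left mult.commute add.commute)
  also have "\<dots> = (\<Sum>z\<in>U. cnj (psi z) * (\<Sum>d\<in>U. psi d ^ 1))"
  proof -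
    have "(\<Sum>d\<in>U. psi (d + z)) = (\<Sum>d\<in>U. psi d ^ 1)" for z
      using shift[of psi z] psi_mod by simp
    thus ?thesis by simp
  qed
  also have "\<dots> = 0" using sum_psi_pow[of 1] by simp
  finally show ?thesis .
qed

lemma T_1: "T 1 = -1"
proof -
  have eq: "T d = T 1" if "d \<in> {1..<P}" for d
  proof -
    have "d mod P \<noteq> 0" using that by simp
    from T_scale[OF this, of 1] show ?thesis by simp
  qed
  have c: "(\<Sum>d\<in>{1..<P}. (1::complex)) = of_nat (p - 1)" using p_ge5 by simp
  have "(\<Sum>d\<in>{1..<P}. T d) = (\<Sum>d\<in>{1..<P}. T 1)" by (rule sum.cong[OF refl eq])
  also have "\<dots> = of_nat (p - 1) * T 1" using c by (simp add: sum_distrib_right[symmetric])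
  finally have s1: "(\<Sum>d\<in>{1..<P}. T d) = of_nat (p - 1) * T 1" .
  have "0 = T 0 + (\<Sum>d\<in>{1..<P}. T d)" using T_sum sum_U_split[of T] by simp
  hence "of_nat (p - 1) * (T 1 + 1) = 0" using s1 T_0 by (simp add: algebra_simps)
  moreover have "(of_nat (p - 1) :: complex) \<noteq> 0" using p_ge5 by simp
  ultimately have "T 1 + 1 = 0" by simp
  thus ?thesis by (simp add: add_eq_0_iff2)
qed

lemma T_nz: "d mod P \<noteq> 0 \<Longrightarrow> T d = -1"
  using T_scale[of d 1] T_1 by simp

definition Q :: "int \<Rightarrow> complex" where
  "Q c = (\<Sum>t\<in>U. psi (t + c) * psi t)"

definition R :: complex where "R = Q 1"

lemma Q_scale: "Q c = psi c ^ 2 * R"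
proof (cases "c mod P = 0")
  case True
  have "Q c = (\<Sum>t\<in>U. psi t ^ 2)"
    unfolding Q_def by (intro sum.cong refl) (metis True psi_cong mod_add_right_eq add_0_right power2_eq_square)
  also have "\<dots> = 0" by (rule sum_psi_pow) simp
  finally show ?thesis using True by (simp add: psi_0)
next
  case False
  have "Q c = (\<Sum>t\<in>U. psi (c * t + c) * psi (c * t))"
    unfolding Q_def
    by (rule scale[OF False, symmetric, where F="\<lambda>t. psi (t + c) * psi t"])
       (metis psi_mod mod_add_left_eq)
  also have "\<dots> = (\<Sum>t\<in>U. psi c ^ 2 * (psi (t + 1) * psi t))"
    by (intro sum.cong refl) (simp add: psi_mult[symmetric] distrib_left power2_eq_square ac_simps)
  finally show ?thesis by (simp add: R_def Q_def sum_distrib_left)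
qed

lemma T_sq_sum: "(\<Sum>e\<in>U. T e * T e) = of_nat p * of_nat (p - 1)"
proof -
  have "(\<Sum>e\<in>{1..<P}. T e * T e) = (\<Sum>e\<in>{1..<P}. 1)"
    by (intro sum.cong refl) (simp add: T_nz)
  also have "\<dots> = of_nat (p - 1)" using p_ge5 by (simp add: of_nat_diff)
  finally have "(\<Sum>e\<in>U. T e * T e) = of_nat (p-1) * of_nat (p-1) + of_nat (p-1)"
    by (simp add: sum_U_split T_0)
  also have "\<dots> = of_nat p * of_nat (p - 1)" using p_ge5 by (simp add: of_nat_diff algebra_simps)
  finally show ?thesis .
qed

lemma inner_c: "(\<Sum>c\<in>U. psi (t + c) * cnj (psi (u + c))) = T (t - u)"
proof -
  have "(\<Sum>c\<in>U. psi (t + c) * cnj (psi (u + c))) = (\<Sum>c\<in>U. (\<lambda>z. psi (z + (t - u)) * cnj (psi z)) (c + u))"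
    by (simp add: ac_simps)
  also have "\<dots> = T (t - u)" unfolding T_def
    by (rule shift) (metis psi_mod mod_add_left_eq)
  finally show ?thesis .
qed

lemma inner_t: "(\<Sum>t\<in>U. psi t * cnj (psi u) * T (t - u)) = (\<Sum>e\<in>U. psi (e + u) * cnj (psi u) * T e)"
proof -
  have "(\<Sum>t\<in>U. psi t * cnj (psi u) * T (t - u)) = (\<Sum>t\<in>U. (\<lambda>e. psi (e + u) * cnj (psi u) * T e) (t + (- u)))"
    by simp
  also have "\<dots> = (\<Sum>e\<in>U. psi (e + u) * cnj (psi u) * T e)"
    by (rule shift) (metis psi_mod T_mod mod_add_left_eq)
  finally show ?thesis .
qed

lemma QQ: "Q c * cnj (Q c) = (\<Sum>t\<in>U. \<Sum>u\<in>U. psi t * cnj (psi u) * (psi (t + c) * cnj (psi (u + c))))"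
proof -
  have "Q c * cnj (Q c) = (\<Sum>t\<in>U. psi (t + c) * psi t) * (\<Sum>u\<in>U. cnj (psi (u + c) * psi u))"
    unfolding Q_def cnj_sum ..
  also have "\<dots> = (\<Sum>t\<in>U. \<Sum>u\<in>U. (psi (t + c) * psi t) * cnj (psi (u + c) * psi u))"
    by (rule sum_product)
  also have "\<dots> = (\<Sum>t\<in>U. \<Sum>u\<in>U. psi t * cnj (psi u) * (psi (t + c) * cnj (psi (u + c))))"
    by (intro sum.cong refl) (simp add: ac_simps)
  finally show ?thesis .
qed

lemma Q_sq_sum: "(\<Sum>c\<in>U. Q c * cnj (Q c)) = of_nat p * of_nat (p - 1)"
proof -
  define F where "F = (\<lambda>c t u. psi t * cnj (psi u) * (psi (t + c) * cnj (psi (u + c))))"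
  have "(\<Sum>c\<in>U. Q c * cnj (Q c)) = (\<Sum>c\<in>U. \<Sum>t\<in>U. \<Sum>u\<in>U. F c t u)"
    by (simp only: QQ F_def)
  also have "\<dots> = (\<Sum>t\<in>U. \<Sum>c\<in>U. \<Sum>u\<in>U. F c t u)"
    by (rule sum.swap)
  also have "\<dots> = (\<Sum>t\<in>U. \<Sum>u\<in>U. \<Sum>c\<in>U. F c t u)"
    by (rule sum.cong[OF refl], rule sum.swap)
  also have "\<dots> = (\<Sum>t\<in>U. \<Sum>u\<in>U. psi t * cnj (psi u) * T (t - u))"
  proof (rule sum.cong[OF refl], rule sum.cong[OF refl])
    fix t u
    have "(\<Sum>c\<in>U. F c t u) = psi t * cnj (psi u) * (\<Sum>c\<in>U. psi (t + c) * cnj (psi (u + c)))"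
      unfolding F_def by (rule sum_distrib_left[symmetric])
    thus "(\<Sum>c\<in>U. F c t u) = psi t * cnj (psi u) * T (t - u)" by (simp only: inner_c)
  qed
  also have "\<dots> = (\<Sum>u\<in>U. \<Sum>t\<in>U. psi t * cnj (psi u) * T (t - u))"
    by (rule sum.swap)
  also have "\<dots> = (\<Sum>u\<in>U. \<Sum>e\<in>U. psi (e + u) * cnj (psi u) * T e)"
    by (rule sum.cong[OF refl], rule inner_t)
  also have "\<dots> = (\<Sum>e\<in>U. \<Sum>u\<in>U. psi (e + u) * cnj (psi u) * T e)"
    by (rule sum.swap)
  also have "\<dots> = (\<Sum>e\<in>U. T e * T e)"
  proof (rule sum.cong[OF refl])
    fix e
    have A: "(\<Sum>u\<in>U. psi (e + u) * cnj (psi u) * T e) = (\<Sum>u\<in>U. psi (u + e) * cnj (psi u)) * T e"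
      by (simp add: sum_distrib_right add.commute)
    have B: "(\<Sum>u\<in>U. psi (u + e) * cnj (psi u)) = T e" by (simp add: T_def)
    from A B show "(\<Sum>u\<in>U. psi (e + u) * cnj (psi u) * T e) = T e * T e" by simp
  qed
  finally show ?thesis using T_sq_sum by simp
qed

lemma psi_pow8: "psi c ^ 2 * cnj (psi c ^ 2) = psi c ^ 4"
proof -
  have "psi c ^ 2 * cnj (psi c ^ 2) = (psi c * cnj (psi c))^2" by (simp add: power_mult_distrib)
  also have "psi c * cnj (psi c) = psi c ^ 4" by (simp add: psi_cnj pow4_split)
  finally show ?thesis using psi_pow4[of c] by simp
qed

lemma R_norm: "R * cnj R = of_nat p"
proof -
  have "(\<Sum>c\<in>U. Q c * cnj (Q c)) = (\<Sum>c\<in>U. psi c ^ 4 * (R * cnj R))"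
  proof (rule sum.cong[OF refl])
    fix c
    have "Q c * cnj (Q c) = (psi c ^ 2 * cnj (psi c ^ 2)) * (R * cnj R)"
      by (simp add: Q_scale ac_simps)
    thus "Q c * cnj (Q c) = psi c ^ 4 * (R * cnj R)" by (simp only: psi_pow8)
  qed
  also have "\<dots> = (\<Sum>c\<in>U. psi c ^ 4) * (R * cnj R)" by (rule sum_distrib_right[symmetric])
  also have "\<dots> = of_nat (p - 1) * (R * cnj R)" by (simp only: sum_psi4)
  finally have "of_nat (p - 1) * (R * cnj R) = of_nat p * of_nat (p - 1)"
    using Q_sq_sum by (simp only:)
  hence "of_nat (p - 1) * (R * cnj R) = of_nat (p - 1) * of_nat p"
    by (simp only: mult.commute)
  moreover have nz: "(of_nat (p - 1) :: complex) \<noteq> 0" using p_ge5 by simp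
  ultimately show ?thesis using mult_cancel_left by (metis mult.commute)
qed

end

context cyc begin

lemma psi4_U: "t \<in> U \<Longrightarrow> psi t ^ 4 = (if t = 0 then 0 else 1)"
  by (simp add: psi_pow4)

lemma psi4_shift: "t \<in> U \<Longrightarrow> psi (t + 1) ^ 4 = (if t = P - 1 then 0 else 1)"
proof -
  assume t: "t \<in> U"
  have "(t + 1) mod P = 0 \<longleftrightarrow> t = P - 1"
  proof
    assume "(t + 1) mod P = 0"
    then obtain k where k: "t + 1 = P * k" by (auto simp: mod_eq_0_iff_dvd dvd_def)
    have t0: "0 \<le> t" "t < P" using t by auto
    have h1: "0 < P * k" using t0 k by linarith
    have h2: "P * k \<le> P" using t0 k by linarith
    have "k \<le> 1" using h2 P_pos by (metis mult.right_neutral mult_le_cancel_left_pos)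
    moreover have "0 < k" using h1 P_pos by (simp add: zero_less_mult_iff)
    ultimately have "k = 1" by simp
    thus "t = P - 1" using k by simp
  qed simp
  thus ?thesis by (simp add: psi_pow4)
qed

lemma sum_but:
  assumes "t0 \<in> U"
  shows "(\<Sum>t\<in>U. (if t = t0 then 0 else 1) * f t) = (\<Sum>t\<in>U. f t) - (f t0 :: complex)"
proof -
  define g where "g = (\<lambda>t. (if t = t0 then 0 else 1) * f t)"
  have 1: "(\<Sum>t\<in>U. g t) = g t0 + (\<Sum>t\<in>U - {t0}. g t)"
    using sum.remove[of U t0 g] assms by simp
  have 2: "(\<Sum>t\<in>U - {t0}. g t) = (\<Sum>t\<in>U - {t0}. f t)"
    by (rule sum.cong) (auto simp: g_def)
  have 3: "(\<Sum>t\<in>U. f t) = f t0 + (\<Sum>t\<in>U - {t0}. f t)"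
    using sum.remove[of U t0 f] assms by simp
  show ?thesis using 1 2 3 by (simp add: g_def)
qed

lemma Pm1_U: "P - 1 \<in> U" using P_pos by simp
lemma zero_U: "0 \<in> U" using P_pos by simp

lemma psi_Pm1: "psi (P - 1) = -1"
proof -
  have "(P - 1) mod P = (-1) mod P" by (simp add: mod_diff_left_eq[symmetric])
  thus ?thesis using psi_cong psi_m1 by metis
qed

lemma sum_psi1: "(\<Sum>t\<in>U. psi t) = 0" using sum_psi_pow[of 1] by simp
lemma sum_psi3: "(\<Sum>t\<in>U. psi t ^ 3) = 0" using sum_psi_pow[of 3] by simp
lemma sum_shift1: "(\<Sum>t\<in>U. psi (t + 1) ^ k) = (\<Sum>t\<in>U. psi t ^ k)"
  by (rule shift) (simp add: psi_mod)

lemma M41: "(\<Sum>t\<in>U. psi (t + 1) ^ 4 * psi t) = 1"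
proof -
  have "(\<Sum>t\<in>U. psi (t + 1) ^ 4 * psi t) = (\<Sum>t\<in>U. (if t = P - 1 then 0 else 1) * psi t)"
    by (intro sum.cong refl) (simp add: psi4_shift)
  also have "\<dots> = 1" using sum_but[OF Pm1_U, of psi] sum_psi1 psi_Pm1 by simp
  finally show ?thesis .
qed

lemma M43: "(\<Sum>t\<in>U. psi (t + 1) ^ 4 * psi t ^ 3) = 1"
proof -
  have "(\<Sum>t\<in>U. psi (t + 1) ^ 4 * psi t ^ 3) = (\<Sum>t\<in>U. (if t = P - 1 then 0 else 1) * psi t ^ 3)"
    by (intro sum.cong refl) (simp add: psi4_shift)
  also have "\<dots> = 1" using sum_but[OF Pm1_U, of "\<lambda>t. psi t ^ 3"] sum_psi3 psi_Pm1 by simp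
  finally show ?thesis .
qed

lemma M44: "(\<Sum>t\<in>U. psi (t + 1) ^ 4 * psi t ^ 4) = of_nat p - 2"
proof -
  have "(\<Sum>t\<in>U. psi (t + 1) ^ 4 * psi t ^ 4) = (\<Sum>t\<in>U. (if t = P - 1 then 0 else 1) * psi t ^ 4)"
    by (intro sum.cong refl) (simp add: psi4_shift)
  also have "\<dots> = of_nat (p - 1) - 1" using sum_but[OF Pm1_U, of "\<lambda>t. psi t ^ 4"] sum_psi4 psi_Pm1 by simp
  finally show ?thesis using p_ge5 by (simp add: of_nat_diff)
qed

lemma M14: "(\<Sum>t\<in>U. psi (t + 1) * psi t ^ 4) = -1"
proof -
  have "(\<Sum>t\<in>U. psi (t + 1) * psi t ^ 4) = (\<Sum>t\<in>U. (if t = 0 then 0 else 1) * psi (t + 1))"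
    by (intro sum.cong refl) (simp add: psi4_U)
  also have "\<dots> = (\<Sum>t\<in>U. psi (t + 1) ^ 1) - psi 1"
    using sum_but[OF zero_U, of "\<lambda>t. psi (t + 1)"] by simp
  also have "\<dots> = -1" using sum_shift1[of 1] sum_psi1 psi_1 by simp
  finally show ?thesis .
qed

lemma M34: "(\<Sum>t\<in>U. psi (t + 1) ^ 3 * psi t ^ 4) = -1"
proof -
  have "(\<Sum>t\<in>U. psi (t + 1) ^ 3 * psi t ^ 4) = (\<Sum>t\<in>U. (if t = 0 then 0 else 1) * psi (t + 1) ^ 3)"
    by (intro sum.cong refl) (simp add: psi4_U)
  also have "\<dots> = (\<Sum>t\<in>U. psi (t + 1) ^ 3) - psi 1 ^ 3"
    using sum_but[OF zero_U, of "\<lambda>t. psi (t + 1) ^ 3"] by simp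
  also have "\<dots> = -1" using sum_shift1[of 3] sum_psi3 psi_1 by simp
  finally show ?thesis .
qed

lemma M13: "(\<Sum>t\<in>U. psi (t + 1) * psi t ^ 3) = -1"
  using T_1 by (simp add: T_def psi_cnj)

lemma M31: "(\<Sum>t\<in>U. psi (t + 1) ^ 3 * psi t) = -1"
proof -
  have "(\<Sum>t\<in>U. psi (t + 1) ^ 3 * psi t) = cnj (\<Sum>t\<in>U. psi (t + 1) * cnj (psi t))"
    by (simp add: cnj_sum psi_cnj[symmetric])
  also have "\<dots> = -1" using T_1 by (simp add: T_def)
  finally show ?thesis .
qed

lemma M11: "(\<Sum>t\<in>U. psi (t + 1) * psi t) = R"
  by (simp add: R_def Q_def)

lemma M33: "(\<Sum>t\<in>U. psi (t + 1) ^ 3 * psi t ^ 3) = cnj R"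
  by (simp add: R_def Q_def cnj_sum psi_cnj)

definition ID :: "int \<Rightarrow> complex" where
  "ID z = (2 * psi z ^ 4 + (1 - \<i>) * psi z + (1 + \<i>) * psi z ^ 3) / 4"

lemma ID_mod: "ID (z mod P) = ID z" by (simp add: ID_def psi_mod)

lemma prod9:
  fixes c4 c1 c3 A4 A1 A3 B4 B1 B3 :: complex
  shows "(c4*A4 + c1*A1 + c3*A3) * (c4*B4 + c1*B1 + c3*B3) =
    c4*c4*(A4*B4) + c4*c1*(A4*B1) + c4*c3*(A4*B3) + c1*c4*(A1*B4) + c1*c1*(A1*B1) + c1*c3*(A1*B3)
    + c3*c4*(A3*B4) + c3*c1*(A3*B1) + c3*c3*(A3*B3)"
  by (simp add: algebra_simps)

lemma N_formula:
  assumes a: "a mod P \<noteq> 0"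
  shows "(\<Sum>z\<in>U. ID (z + a) * ID z) = (of_nat p - 3 + psi a ^ 2 * of_real (Im R)) / 4"
proof -
  define w where "w = psi a"
  have w4: "w ^ 4 = 1" using psi_pow4[of a] a by (simp add: w_def)
  define c4 where "c4 = (1/2 :: complex)"
  define c1 where "c1 = (1 - \<i>) * w / 4"
  define c3 where "c3 = (1 + \<i>) * w ^ 3 / 4"
  have IDs: "ID (a * z) = c4 * psi z ^ 4 + c1 * psi z + c3 * psi z ^ 3" for z
  proof -
    have "psi (a * z) ^ 4 = psi z ^ 4" using w4 by (simp add: psi_mult power_mult_distrib w_def)
    thus ?thesis by (simp add: ID_def c4_def c1_def c3_def psi_mult power_mult_distrib w_def field_simps)
  qed
  have "(\<Sum>z\<in>U. ID (z + a) * ID z) = (\<Sum>t\<in>U. ID (a * t + a) * ID (a * t))"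
    by (rule scale[OF a, symmetric, where F="\<lambda>z. ID (z + a) * ID z"])
       (metis ID_mod mod_add_left_eq)
  also have "\<dots> = (\<Sum>t\<in>U. (c4 * psi (t+1) ^ 4 + c1 * psi (t+1) + c3 * psi (t+1) ^ 3) *
                              (c4 * psi t ^ 4 + c1 * psi t + c3 * psi t ^ 3))"
    by (intro sum.cong refl) (simp add: IDs[symmetric] distrib_left)
  also have "\<dots> = c4*c4*(\<Sum>t\<in>U. psi (t+1)^4 * psi t^4) + c4*c1*(\<Sum>t\<in>U. psi (t+1)^4 * psi t)
     + c4*c3*(\<Sum>t\<in>U. psi (t+1)^4 * psi t^3) + c1*c4*(\<Sum>t\<in>U. psi (t+1) * psi t^4)
     + c1*c1*(\<Sum>t\<in>U. psi (t+1) * psi t) + c1*c3*(\<Sum>t\<in>U. psi (t+1) * psi t^3)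
     + c3*c4*(\<Sum>t\<in>U. psi (t+1)^3 * psi t^4) + c3*c1*(\<Sum>t\<in>U. psi (t+1)^3 * psi t)
     + c3*c3*(\<Sum>t\<in>U. psi (t+1)^3 * psi t^3)"
    by (simp only: prod9 sum.distrib sum_distrib_left[symmetric])
  also have "\<dots> = c4*c4*(of_nat p - 2) + c4*c1 + c4*c3 - c1*c4 + c1*c1*R - c1*c3 - c3*c4 - c3*c1 + c3*c3*cnj R"
    by (simp only: M44 M41 M43 M14 M11 M13 M34 M31 M33) simp
  also have "\<dots> = (of_nat p - 3 + w ^ 2 * of_real (Im R)) / 4"
  proof -
    have w6: "w ^ 6 = w ^ 2" using w4 by (metis power_add mult_1 numeral_Bit0 numeral_Bit1 numeral_One add_2_eq_Suc' mult.commute one_add_one power_one_right numeral_plus_numeral semiring_norm(3) semiring_norm(5) semiring_norm(6))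
    have ww: "w * w ^ 3 = 1" using w4 pow4_split by simp
    have "c1 * c3 = ((1 - \<i>) * (1 + \<i>)) * (w * w ^ 3) / 16" by (simp add: c1_def c3_def)
    also have "(1 - \<i>) * (1 + \<i>) = (2::complex)" by (simp add: algebra_simps)
    finally have c13: "c1 * c3 = 1/8" using ww by simp
    have c11: "c1 * c1 = - \<i> * w^2 / 8" by (simp add: c1_def field_simps power2_eq_square; (simp add: algebra_simps)?)
    have c33: "c3 * c3 = \<i> * w^2 / 8" using w6 by (simp add: c3_def field_simps power_add[symmetric]; (simp add: algebra_simps)?)
    have RI: "- \<i> * R + \<i> * cnj R = 2 * of_real (Im R)" by (simp add: complex_eq_iff)
    have "c4*c4*(of_nat p - 2) + c4*c1 + c4*c3 - c1*c4 + c1*c1*R - c1*c3 - c3*c4 - c3*c1 + c3*c3*cnj R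
        = (of_nat p - 2) / 4 - 2 * (c1 * c3) + w^2 * (- \<i> * R + \<i> * cnj R) / 8"
      by (simp add: c11 c33 c4_def algebra_simps mult.commute[of c3 c1]; simp add: field_simps)
    also have "\<dots> = (of_nat p - 3 + w ^ 2 * of_real (Im R)) / 4" unfolding RI by (simp add: c13 field_simps)
    finally show ?thesis .
  qed
  finally show ?thesis by (simp add: w_def)
qed

end

context cyc begin

lemma nat_in_U: "x \<in> {1..p-1} \<Longrightarrow> int x mod P = int x"
  by auto

lemma nat_nz: "x \<in> {1..p-1} \<Longrightarrow> int x mod P \<noteq> 0"
  using nat_in_U by auto

lemma cong_nat_int: "[x = g ^ n] (mod p) \<longleftrightarrow> [int g ^ n = int x] (mod P)"
  by (metis cong_int_iff cong_sym_eq of_nat_power)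

lemma i_pow_inj: "a < 4 \<Longrightarrow> b < 4 \<Longrightarrow> (\<i>::complex) ^ a = \<i> ^ b \<Longrightarrow> a = b"
proof -
  assume "a < 4" "b < 4" "(\<i>::complex) ^ a = \<i> ^ b"
  moreover have "a \<in> {0,1,2,3}" "b \<in> {0,1,2,3}" using calculation by auto
  ultimately show "a = b" by (auto simp: power3_eq_cube complex_eq_iff)
qed

lemma class4:
  assumes j: "j < 4"
  shows "x \<in> cyclotomic_class p g 4 j \<longleftrightarrow> x \<in> {1..p-1} \<and> psi (int x) = \<i> ^ j"
proof
  assume "x \<in> cyclotomic_class p g 4 j"
  then obtain k where x: "x \<in> {1..p-1}" and k: "[x = g ^ (4 * k + j)] (mod p)"
    unfolding cyclotomic_class_def by blast
  have "psi (int x) = \<i> ^ (4 * k + j)" using psi_eq[OF nat_nz[OF x]] k cong_nat_int by blast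
  also have "\<dots> = \<i> ^ j" by (rule i_pow_cong) (simp add: cong_def)
  finally show "x \<in> {1..p-1} \<and> psi (int x) = \<i> ^ j" using x by simp
next
  assume h: "x \<in> {1..p-1} \<and> psi (int x) = \<i> ^ j"
  obtain m where m: "[int g ^ m = int x] (mod P)" using exists_pow nat_nz h by blast
  have "\<i> ^ (m mod 4) = (\<i>::complex) ^ j"
    using psi_eq[OF nat_nz m] h i_pow_mod4[of m] by (simp add: nat_nz)
  hence "m mod 4 = j" using i_pow_inj j by simp
  hence "m = 4 * (m div 4) + j" using mult_div_mod_eq[of 4 m] by linarith
  hence "[x = g ^ (4 * (m div 4) + j)] (mod p)" using m cong_nat_int by metis
  thus "x \<in> cyclotomic_class p g 4 j" using h unfolding cyclotomic_class_def by blast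
qed

lemma i_pow_sq: "((\<i>::complex) ^ k)^2 = (-1) ^ k"
  by (metis power_mult_distrib power_mult power2_i mult.commute power_mult[symmetric])

lemma class2:
  assumes j: "j < 2"
  shows "x \<in> cyclotomic_class p g 2 j \<longleftrightarrow> x \<in> {1..p-1} \<and> psi (int x) ^ 2 = (-1) ^ j"
proof
  assume "x \<in> cyclotomic_class p g 2 j"
  then obtain k where x: "x \<in> {1..p-1}" and k: "[x = g ^ (2 * k + j)] (mod p)"
    unfolding cyclotomic_class_def by blast
  have "psi (int x) = \<i> ^ (2 * k + j)" using psi_eq[OF nat_nz[OF x]] k cong_nat_int by blast
  hence "psi (int x) ^ 2 = (-1) ^ (2 * k + j)" by (simp add: i_pow_sq)
  also have "\<dots> = (-1) ^ j" by (simp add: power_add power_mult)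
  finally show "x \<in> {1..p-1} \<and> psi (int x) ^ 2 = (-1) ^ j" using x by simp
next
  assume h: "x \<in> {1..p-1} \<and> psi (int x) ^ 2 = (-1) ^ j"
  obtain m where m: "[int g ^ m = int x] (mod P)" using exists_pow nat_nz h by blast
  have "(-1::complex) ^ m = (-1) ^ j"
    using psi_eq[OF nat_nz m] h i_pow_sq[of m] by (simp add: nat_nz)
  have "m mod 2 = j"
  proof (cases "even m")
    case True
    hence "(-1::complex) ^ j = 1" using \<open>(-1::complex) ^ m = (-1) ^ j\<close> by simp
    thus ?thesis using True j by (auto simp: less_2_cases_iff)
  next
    case False
    hence "(-1::complex) ^ j = -1" using \<open>(-1::complex) ^ m = (-1) ^ j\<close> by simp
    thus ?thesis using False j by (auto simp: less_2_cases_iff odd_iff_mod_2_eq_one)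
  qed
  hence "m = 2 * (m div 2) + j" using mult_div_mod_eq[of 2 m] by linarith
  hence "[x = g ^ (2 * (m div 2) + j)] (mod p)" using m cong_nat_int by metis
  thus "x \<in> cyclotomic_class p g 2 j" using h unfolding cyclotomic_class_def by blast
qed

definition DD :: "nat set" where
  "DD = cyclotomic_class p g 4 0 \<union> cyclotomic_class p g 4 1"

lemma DD_iff: "x \<in> DD \<longleftrightarrow> x \<in> {1..p-1} \<and> (psi (int x) = 1 \<or> psi (int x) = \<i>)"
  unfolding DD_def using class4[of 0 x] class4[of 1 x] by auto

lemma DD_sub: "DD \<subseteq> {1..p-1}" using DD_iff by auto

lemma psi_vals: "z mod P \<noteq> 0 \<Longrightarrow> psi z \<in> {1, \<i>, -1, -\<i>}"
proof -
  assume z: "z mod P \<noteq> 0"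
  then obtain k where "psi z = \<i> ^ k" using psi_nz by blast
  hence "psi z = \<i> ^ (k mod 4)" using i_pow_mod4 by simp
  moreover have "k mod 4 \<in> {0,1,2,3}" by auto
  ultimately show ?thesis by (auto simp: power3_eq_cube)
qed

lemma ID_val: "z \<in> U \<Longrightarrow> ID z = of_bool (z \<in> int ` DD)"
proof -
  assume z: "z \<in> U"
  show ?thesis
  proof (cases "z = 0")
    case True
    have "0 \<notin> int ` DD" using DD_sub by auto
    thus ?thesis using True by (simp add: ID_def psi_0)
  next
    case False
    have zm: "z mod P = z" using z by simp
    hence nz: "z mod P \<noteq> 0" using False by simp
    have zin: "z \<in> int ` DD \<longleftrightarrow> (psi z = 1 \<or> psi z = \<i>)"
    proof -
      have "z = int (nat z)" using z by simp
      moreover have "nat z \<in> {1..p-1}" using z False by auto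
      ultimately show ?thesis using DD_iff[of "nat z"] by (metis imageE image_eqI nat_int)
    qed
    have "ID z = (2 + (1 - \<i>) * psi z + (1 + \<i>) * cnj (psi z)) / 4"
      using psi_pow4[of z] nz by (simp add: ID_def psi_cnj)
    moreover have "psi z \<in> {1, \<i>, -1, -\<i>}" using psi_vals[OF nz] .
    ultimately show ?thesis using zin by (auto simp: complex_eq_iff)
  qed
qed

lemma nonneg_img: "w \<ge> 0 \<Longrightarrow> w \<in> int ` DD \<longleftrightarrow> nat w \<in> DD"
  by (metis image_eqI imageE nat_eq_iff nat_int)

lemma dc_sum: "of_nat (diff_count p DD a) = (\<Sum>z\<in>U. ID (z + int a) * ID z)"
proof -
  define S where "S = {(x, y). x \<in> DD \<and> y \<in> DD \<and> [int x - int y = int a] (mod P)}"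
  have finD: "finite DD" using DD_sub finite_subset by blast
  have inj: "inj_on snd S"
  proof (rule inj_onI)
    fix u v assume u: "u \<in> S" and v: "v \<in> S" and e: "snd u = snd v"
    obtain x y where uxy: "u = (x, y)" by (cases u)
    obtain x' y' where vxy: "v = (x', y')" by (cases v)
    have "y = y'" using e uxy vxy by simp
    have c1: "[int x - int y = int a] (mod P)" "x \<in> DD" using u uxy S_def by auto
    have c2: "[int x' - int y = int a] (mod P)" "x' \<in> DD" using v vxy S_def \<open>y = y'\<close> by auto
    have "[int x = int x'] (mod P)"
    proof -
      have "[int x - int y + int y = int x' - int y + int y] (mod P)"
        using c1(1) c2(1) by (metis cong_add cong_refl cong_sym cong_trans)
      thus ?thesis by simp
    qed
    hence "int x mod P = int x' mod P" by (simp add: cong_def)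
    hence "int x = int x'" using nat_in_U c1(2) c2(2) DD_sub by (metis subsetD)
    thus "u = v" using uxy vxy \<open>y = y'\<close> by simp
  qed
  have img0: "y \<in> snd ` S \<longleftrightarrow> y \<in> {y \<in> DD. nat ((int y + int a) mod P) \<in> DD}" for y
    proof
      assume "y \<in> snd ` S"
      then obtain x where xy: "x \<in> DD" "y \<in> DD" "[int x - int y = int a] (mod P)"
        unfolding S_def by auto
      have "[int x = int y + int a] (mod P)" using xy(3)
        by (metis add.commute cong_add_lcancel diff_add_cancel)
      hence "int x mod P = (int y + int a) mod P" by (simp add: cong_def)
      hence "int x = (int y + int a) mod P" using nat_in_U xy(1) DD_sub by (metis subsetD)
      hence "nat ((int y + int a) mod P) = x" by simp
      thus "y \<in> {y \<in> DD. nat ((int y + int a) mod P) \<in> DD}" using xy by simp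
    next
      assume y: "y \<in> {y \<in> DD. nat ((int y + int a) mod P) \<in> DD}"
      define x where "x = nat ((int y + int a) mod P)"
      have ix: "int x = (int y + int a) mod P" using x_def P_pos by simp
      have "[int x - int y = int a] (mod P)"
      proof -
        have "[int x = int y + int a] (mod P)" using ix by (simp add: cong_def)
        hence "[int x - int y = int y + int a - int y] (mod P)" by (rule cong_diff) (rule cong_refl)
        thus ?thesis by simp
      qed
      hence "(x, y) \<in> S" using y x_def S_def by auto
      thus "y \<in> snd ` S" by force
    qed
  have img: "snd ` S = {y \<in> DD. nat ((int y + int a) mod P) \<in> DD}"
    using img0 by blast
  have "diff_count p DD a = card S" by (simp add: diff_count_def S_def)
  also have "\<dots> = card (snd ` S)" using card_image[OF inj] by simp
  also have "\<dots> = card {y \<in> DD. nat ((int y + int a) mod P) \<in> DD}" using img by simp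
  also have "\<dots> = card (int ` {y \<in> DD. nat ((int y + int a) mod P) \<in> DD})"
    by (simp add: card_image)
  also have "int ` {y \<in> DD. nat ((int y + int a) mod P) \<in> DD} = U \<inter> {z. z \<in> int ` DD \<and> (z + int a) mod P \<in> int ` DD}"
  proof -
    have "z \<in> int ` {y \<in> DD. nat ((int y + int a) mod P) \<in> DD} \<longleftrightarrow> z \<in> U \<inter> {z. z \<in> int ` DD \<and> (z + int a) mod P \<in> int ` DD}" for z
    proof
      assume "z \<in> int ` {y \<in> DD. nat ((int y + int a) mod P) \<in> DD}"
      then obtain y where y: "z = int y" "y \<in> DD" "nat ((int y + int a) mod P) \<in> DD" by auto
      have "y \<in> {1..p-1}" using y(2) DD_sub by blast
      hence "y < p" "y \<ge> 1" using p_ge5 by auto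
      thus "z \<in> U \<inter> {z. z \<in> int ` DD \<and> (z + int a) mod P \<in> int ` DD}"
        using y nonneg_img[of "(int y + int a) mod P"] by auto
    next
      assume z: "z \<in> U \<inter> {z. z \<in> int ` DD \<and> (z + int a) mod P \<in> int ` DD}"
      then obtain y where y: "z = int y" "y \<in> DD" by auto
      have "nat ((int y + int a) mod P) \<in> DD" using z y nonneg_img[of "(int y + int a) mod P"] by auto
      thus "z \<in> int ` {y \<in> DD. nat ((int y + int a) mod P) \<in> DD}" using y by auto
    qed
    thus ?thesis by blast
  qed
  finally have "of_nat (diff_count p DD a) = (of_nat (card (U \<inter> {z. z \<in> int ` DD \<and> (z + int a) mod P \<in> int ` DD})) :: complex)"
    by simp
  also have "\<dots> = (\<Sum>z\<in>U. of_bool (z \<in> int ` DD \<and> (z + int a) mod P \<in> int ` DD))"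
    by simp
  also have "\<dots> = (\<Sum>z\<in>U. ID (z + int a) * ID z)"
  proof (rule sum.cong[OF refl])
    fix z assume z: "z \<in> U"
    have "(z + int a) mod P \<in> U" using P_pos by simp
    hence e1: "ID (z + int a) = of_bool ((z + int a) mod P \<in> int ` DD)"
      using ID_val ID_mod by metis
    show "of_bool (z \<in> int ` DD \<and> (z + int a) mod P \<in> int ` DD) = ID (z + int a) * ID z"
      unfolding e1 ID_val[OF z]
      by (cases "z \<in> int ` DD"; cases "(z + int a) mod P \<in> int ` DD") simp_all
  qed
  finally show ?thesis .
qed

lemma psi_gauss: "Re (psi z) \<in> \<int> \<and> Im (psi z) \<in> \<int>"
proof (cases "z mod P = 0")
  case True thus ?thesis by (simp add: psi_0)
next
  case False
  thus ?thesis using psi_vals[OF False] by auto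
qed

lemma R_gauss: "Re R \<in> \<int>" "Im R \<in> \<int>"
proof -
  have R: "R = (\<Sum>t\<in>U. psi ((t + 1) * t))" by (simp add: R_def Q_def psi_mult)
  show "Re R \<in> \<int>" unfolding R Re_sum using psi_gauss by auto
  show "Im R \<in> \<int>" unfolding R Im_sum using psi_gauss by auto
qed

lemma psi_sq_vals: "z mod P \<noteq> 0 \<Longrightarrow> psi z ^ 2 = 1 \<or> psi z ^ 2 = -1"
proof -
  assume "z mod P \<noteq> 0"
  hence "psi z \<in> {1, \<i>, -1, -\<i>}" by (rule psi_vals)
  thus ?thesis by (auto simp: power2_eq_square complex_eq_iff)
qed

lemma dc_int:
  assumes a: "a \<in> {1..p-1}" and B: "Im R = of_int B"
  shows "int (4 * diff_count p DD a) = int p - 3 + (if psi (int a) ^ 2 = 1 then B else - B)"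
proof -
  have an: "int a mod P \<noteq> 0" using nat_nz[OF a] .
  have "of_nat (diff_count p DD a) = (of_nat p - 3 + psi (int a) ^ 2 * of_real (Im R)) / (4::complex)"
    using dc_sum N_formula[OF an] by simp
  hence e: "of_nat (diff_count p DD a) * 4 = (of_nat p - 3 + psi (int a) ^ 2 * of_int B :: complex)"
    using B by simp
  have "(of_int (int (4 * diff_count p DD a)) :: complex) = of_int (int p - 3 + (if psi (int a) ^ 2 = 1 then B else - B))"
    using e psi_sq_vals[OF an] by (auto simp: mult.commute[of 4])
  thus ?thesis using of_int_eq_iff by blast
qed

end

lemma two_sq_aux:
  fixes A B s p m :: int
  assumes p: "p > 0" and ABp: "A^2 + B^2 = p" and sp: "s^2 + 4 = p"
    and Be: "even B" and so: "odd s"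
    and m: "A * s + 2 * B = p * m" and eq: "(A*s + 2*B)^2 + (2*A - B*s)^2 = p^2"
  shows "B^2 = 4"
proof -
  have Ao: "odd A"
  proof
    assume "even A"
    hence "even (A^2 + B^2)" using Be by simp
    hence "even p" using ABp by simp
    moreover have "odd (s^2 + 4)" using so by simp
    ultimately show False using sp by simp
  qed
  have "p^2 * m^2 + (2*A - B*s)^2 = p^2" using eq m by (simp add: power_mult_distrib)
  hence le: "p^2 * m^2 \<le> p^2 * 1" by (smt (verit) zero_le_power2)
  have "m^2 \<le> 1" using le p by (simp add: mult_le_cancel_left)
  hence "\<bar>m\<bar> \<le> 1" by (simp add: abs_square_le_1)
  moreover have "m \<noteq> 0"
  proof
    assume "m = 0"
    hence "A * s = - 2 * B" using m by simp
    moreover have "odd (A * s)" using Ao so by simp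
    ultimately show False by simp
  qed
  ultimately have "m^2 = 1" by (smt (verit) power2_eq_1_iff)
  hence "(2*A - B*s)^2 = 0" using \<open>p^2 * m^2 + (2*A - B*s)^2 = p^2\<close> by simp
  hence AB: "2*A = B*s" by simp
  obtain c where c: "B = 2*c" using Be by blast
  have "A = c * s" using AB c by simp
  hence "c^2 * (s^2 + 4) = p" using ABp c by (simp add: power_mult_distrib algebra_simps)
  hence "c^2 * p = 1 * p" using sp by simp
  hence "c^2 = 1" using p by simp
  thus ?thesis using c by (simp add: power_mult_distrib)
qed

lemma two_sq_unique:
  fixes A B s p :: int
  assumes pr: "prime p" and ABp: "A^2 + B^2 = p" and sp: "s^2 + 4 = p"
    and Be: "even B" and so: "odd s"
  shows "B^2 = 4"
proof -
  have p: "p > 0" using pr prime_gt_0_int by blast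
  have fac: "(A*s + 2*B) * (A*s - 2*B) = p * (p - 4 - B^2)"
  proof -
    have "(A*s + 2*B) * (A*s - 2*B) = A^2 * s^2 - 4 * B^2" by (simp add: algebra_simps power2_eq_square)
    also have "\<dots> = (p - B^2) * (p - 4) - 4 * B^2" using ABp sp by (smt (verit))
    finally show ?thesis by (simp add: algebra_simps power2_eq_square)
  qed
  hence "p dvd (A*s + 2*B) * (A*s - 2*B)" by simp
  hence "p dvd (A*s + 2*B) \<or> p dvd (A*s - 2*B)" using pr prime_dvd_mult_iff by blast
  thus ?thesis
  proof
    assume "p dvd (A*s + 2*B)"
    then obtain m where m: "A*s + 2*B = p*m" by blast
    have eq: "(A*s + 2*B)^2 + (2*A - B*s)^2 = p^2"
    proof -
      have "(A*s + 2*B)^2 + (2*A - B*s)^2 = (A^2 + B^2) * (s^2 + 4)" by (simp add: algebra_simps power2_eq_square)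
      thus ?thesis using ABp sp by (simp add: power2_eq_square)
    qed
    show ?thesis by (rule two_sq_aux[OF p ABp sp Be so m eq])
  next
    assume "p dvd (A*s - 2*B)"
    then obtain m where m: "A*s + 2*(-B) = p*m" by (metis diff_minus_eq_add minus_mult_right dvd_def mult_minus_right add_uminus_conv_diff)
    have eq: "(A*s + 2*(-B))^2 + (2*A - (-B)*s)^2 = p^2"
    proof -
      have "(A*s + 2*(-B))^2 + (2*A - (-B)*s)^2 = (A^2 + B^2) * (s^2 + 4)" by (simp add: algebra_simps power2_eq_square)
      thus ?thesis using ABp sp by (simp add: power2_eq_square)
    qed
    have "(-B)^2 = 4" by (rule two_sq_aux[OF p _ sp _ so m eq]) (use ABp Be in auto)
    thus ?thesis by simp
  qed
qed

theorem lemma4: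
  fixes p g :: nat and s :: int
  assumes "prime p" and "p mod 8 = 5"
    and "odd s" and "int p = s^2 + 4"
    and "is_generator p g"
  defines "D \<equiv> cyclotomic_class p g 4 0 \<union> cyclotomic_class p g 4 1"
  defines "S_D \<equiv> {a \<in> {1..p-1}. diff_count p D a = (p - 5) div 4}"
  shows "S_D = cyclotomic_class p g 2 0 \<or> S_D = cyclotomic_class p g 2 1"
proof -
  interpret cyc p g using assms(1,2,5) by unfold_locales
  have DD: "D = DD" by (simp add: D_def DD_def)
  obtain A where A: "Re R = of_int A" using R_gauss(1) Ints_cases by blast
  obtain B where B: "Im R = of_int B" using R_gauss(2) Ints_cases by blast
  have "complex_of_real ((Re R)\<^sup>2 + (Im R)\<^sup>2) = of_nat p" using R_norm complex_mult_cnj by metis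
  hence "(Re R)\<^sup>2 + (Im R)\<^sup>2 = real p" by (metis of_real_eq_iff of_real_of_nat_eq)
  hence "real_of_int (A^2 + B^2) = real_of_int (int p)" using A B by simp
  hence AB: "A^2 + B^2 = int p" by (simp only: of_int_eq_iff)
  have one: "(1::nat) \<in> {1..p-1}" using p_ge5 by simp
  have "int (4 * diff_count p DD 1) = int p - 3 + B"
    using dc_int[OF one B] psi_1 by simp
  moreover obtain q where q: "p = 8 * q + 5" using assms(2) by (metis div_mult_mod_eq mult.commute)
  ultimately have "B = 2 * (2 * int (diff_count p DD 1) - 4 * int q - 1)" by simp
  hence Be: "even B" by simp
  have "B^2 = 4"
    by (rule two_sq_unique[OF P_prime AB _ Be assms(3)]) (use assms(4) in simp)
  hence B2: "B = 2 \<or> B = -2"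
    by (metis power2_eq_iff power2_eq_square mult_2_right numeral_Bit0 numeral_One minus_one_mult_self
      semiring_norm(2) one_add_one mult_minus_left power_minus)
  have f4: "int (4 * ((p - 5) div 4)) = int p - 5" using q by simp
  have key: "a \<in> S_D \<longleftrightarrow> a \<in> {1..p-1} \<and> (if psi (int a) ^ 2 = 1 then B else - B) = -2" for a
  proof (cases "a \<in> {1..p-1}")
    case True
    have "diff_count p DD a = (p - 5) div 4 \<longleftrightarrow> int (4 * diff_count p DD a) = int (4 * ((p - 5) div 4))"
      by linarith
    also have "\<dots> \<longleftrightarrow> (if psi (int a) ^ 2 = 1 then B else - B) = -2"
      using dc_int[OF True B] f4 by linarith
    finally show ?thesis using True by (simp add: S_D_def DD)
  next
    case False thus ?thesis by (auto simp: S_D_def)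
  qed
  have C0: "a \<in> cyclotomic_class p g 2 0 \<longleftrightarrow> a \<in> {1..p-1} \<and> psi (int a) ^ 2 = 1" for a
    using class2[of 0 a] by simp
  have C1: "a \<in> cyclotomic_class p g 2 1 \<longleftrightarrow> a \<in> {1..p-1} \<and> psi (int a) ^ 2 = -1" for a
    using class2[of 1 a] by simp
  from B2 show ?thesis
  proof
    assume "B = 2"
    have "a \<in> S_D \<longleftrightarrow> a \<in> cyclotomic_class p g 2 1" for a
    proof (cases "a \<in> {1..p-1}")
      case True
      have "psi (int a) ^ 2 = 1 \<or> psi (int a) ^ 2 = -1" using psi_sq_vals nat_nz[OF True] by blast
      thus ?thesis using key[of a] C1[of a] True \<open>B = 2\<close> by auto
    next
      case False thus ?thesis using key[of a] C1[of a] by auto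
    qed
    thus ?thesis by blast
  next
    assume "B = -2"
    have "a \<in> S_D \<longleftrightarrow> a \<in> cyclotomic_class p g 2 0" for a
    proof (cases "a \<in> {1..p-1}")
      case True
      have "psi (int a) ^ 2 = 1 \<or> psi (int a) ^ 2 = -1" using psi_sq_vals nat_nz[OF True] by blast
      thus ?thesis using key[of a] C0[of a] True \<open>B = -2\<close> by auto
    next
      case False thus ?thesis using key[of a] C0[of a] by auto
    qed
    thus ?thesis by blast
  qed
qed


end
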